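(* Let $\Phi \triangleright \Gamma \vdash^{(b,e,m,f)} t:\sigma$ be a derivation in system $\mathscr{E}$. Then (1) (Relevance) $\mathrm{dom}(\Gamma)\subseteq \mathrm{fv}(t)$; (2) (Clash-free) $t$ is (head) clash-free.
   Context: Pair pattern calculus: patterns $p,q ::= x\mid\langle p,q\rangle$ (linear); $\mathrm{var}(p)$ = variables of $p$; $p\# q$ means $\mathrm{var}(p)\cap\mathrm{var}(q)=\emptyset$. Terms $t,u ::= x\mid\lambda p.t\mid\langle t,u\rangle\mid t\,u\mid t[p/u]$, with $\mathrm{var}(p)$ bound in $t$ in $\lambda p.t$ and $t[p/u]$; $\mathrm{fv}$ as usual ($\mathrm{fv}(\lambda p.t)=\mathrm{fv}(t)\setminus\mathrm{var}(p)$, $\mathrm{fv}(t[p/u])=(\mathrm{fv}(t)\setminus\mathrm{var}(p))\cup\mathrm{fv}(u)$); terms modulo $\alpha$. List contexts $L::=\Box\mid L[p/u]$, $L\langle t\rangle$ plugging. Head clashes are terms of the form $L\langle\langle u_1,u_2\rangle\rangle v$, $t[\langle p_1,p_2\rangle/L\langle\lambda p.u\rangle]$, or $L_1\langle\lambda\langle p_1,p_2\rangle.t\rangle L_2\langle\lambda p.u\rangle$; a term is (head) clash-free if it contains no head clash in head position. System $\mathscr{E}$. Types: tight types $\mathtt{t} ::= \bullet_{\mathcal{N}}\mid\bullet_{\mathcal{M}}$; types $\sigma ::= \mathtt{t}\mid \mathcal{A}_1\times\mathcal{A}_2\mid \mathcal{A}\to\sigma$; multi-types $\mathcal{A} ::=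 [\sigma_k]_{k\in K}$ (finite multisets, possibly empty, written $[\,]$). A typing context $\Gamma$ maps variables to multi-types, with $\mathrm{dom}(\Gamma)$ the variables assigned a non-empty multi-type; $\Gamma\wedge\Delta$ is pointwise multiset union; $\Gamma;x:\mathcal{A}$ denotes $\Gamma$ extended with $x\notin\mathrm{dom}(\Gamma)$; $\Gamma|_p$ is the restriction of $\Gamma$ to $\mathrm{var}(p)$ and $\Gamma\setminus\mathrm{var}(p)$ the removal of $\mathrm{var}(p)$. $\mathrm{tight}(\sigma)$ iff $\sigma\in\{\bullet_{\mathcal{N}},\bullet_{\mathcal{M}}\}$; extended to multi-types and contexts elementwise. Judgements: $\Gamma\vdash^{(b,e,m,f)} t:\sigma$, $\Gamma\vdash^{(b,e,m,f)} t:\mathcal{A}$, and pattern judgements $\Gamma\Vdash^{(e,m,f)} p:\mathcal{A}$. Rules: (pat_v) $x:\mathcal{A}\Vdash^{(1,0,0)} x:\mathcal{A}$. (pat_×) from $\Gamma\Vdash^{(e_p,m_p,f_p)}p:\mathcal{A}$, $\Delta\Vdash^{(e_q,m_q,f_q)}q:\mathcal{B}$, $p\#q$ infer $\Gamma\wedge\Delta\Vdash^{(e_p+e_q,1+m_p+m_q,f_p+f_q)}\langle p,q\rangle:[\mathcal{A}\times\mathcal{B}]$. (pat_p) if $\mathrm{dom}(\Gamma)\subseteq\mathrm{var}(\langle p,q\rangle)$ and $\mathrm{tight}(\Gamma)$ then $\Gamma\Vdash^{(0,0,1)}\langle p,q\rangle:[\bullet_{\mathcal{N}}]$. (ax) $x:[\sigma]\vdash^{(0,0,0,0)}x:\sigma$.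 (abs) from $\Gamma\vdash^{(b,e,m,f)}t:\sigma$ and $\Gamma|_p\Vdash^{(e_p,m_p,f_p)}p:\mathcal{A}$ infer $\Gamma\setminus\mathrm{var}(p)\vdash^{(b+1,e+e_p,m+m_p,f+f_p)}\lambda p.t:\mathcal{A}\to\sigma$. (abs_p) from $\Gamma\vdash^{(b,e,m,f)}t:\mathtt{t}$ with $\mathtt{t}$ tight and $\mathrm{tight}(\Gamma|_p)$ infer $\Gamma\setminus\mathrm{var}(p)\vdash^{(b,e,m,f+1)}\lambda p.t:\bullet_{\mathcal{M}}$. (many) from $(\Gamma_k\vdash^{(b_k,e_k,m_k,f_k)}t:\sigma_k)_{k\in K}$ ($K$ possibly empty) infer $\wedge_k\Gamma_k\vdash^{(\sum b_k,\sum e_k,\sum m_k,\sum f_k)}t:[\sigma_k]_{k\in K}$. (app) from $\Gamma\vdash^{(b_t,e_t,m_t,f_t)}t:\mathcal{A}\to\sigma$ and $\Delta\vdash^{(b_u,e_u,m_u,f_u)}u:\mathcal{A}$ infer $\Gamma\wedge\Delta\vdash^{(b_t+b_u,e_t+e_u,m_t+m_u,f_t+f_u)}t\,u:\sigma$. (app_p) from $\Gamma\vdash^{(b,e,m,f)}t:\bullet_{\mathcal{N}}$ infer $\Gamma\vdash^{(b,e,m,f+1)}t\,u:\bullet_{\mathcal{N}}$. (pair) from $\Gamma\vdash^{(b_t,e_t,m_t,f_t)}t:\mathcal{A}$ and $\Delta\vdash^{(b_u,e_u,m_u,f_u)}u:\mathcal{B}$ infer $\Gamma\wedge\Delta\vdash^{(b_t+b_u,e_t+e_u,m_t+m_u,f_t+f_u)}\langle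 t,u\rangle:\mathcal{A}\times\mathcal{B}$. (pair_p) $\vdash^{(0,0,0,1)}\langle t,u\rangle:\bullet_{\mathcal{M}}$ (empty context). (match) from $\Gamma\vdash^{(b_t,e_t,m_t,f_t)}t:\sigma$, $\Gamma|_p\Vdash^{(e_p,m_p,f_p)}p:\mathcal{A}$ and $\Delta\vdash^{(b_u,e_u,m_u,f_u)}u:\mathcal{A}$ infer $(\Gamma\setminus\mathrm{var}(p))\wedge\Delta\vdash^{(b_t+b_u,e_t+e_u+e_p,m_t+m_u+m_p,f_t+f_u+f_p)}t[p/u]:\sigma$. *)

theory Defs
  imports Main "HOL-Library.Multiset"
begin

datatype 'v pat = PVar 'v | PPair "'v pat" "'v pat"

datatype 'v trm =
    Var 'v
  | Lam "'v pat" "'v trm"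
  | Pair "'v trm" "'v trm"
  | App "'v trm" "'v trm"
  | Sub "'v trm" "'v pat" "'v trm"   \<comment> \<open>Sub t p u  is  t[p/u]\<close>

fun pvars :: "'v pat \<Rightarrow> 'v set" where
  "pvars (PVar x) = {x}"
| "pvars (PPair p q) = pvars p \<union> pvars q"

fun linear_pat :: "'v pat \<Rightarrow> bool" where
  "linear_pat (PVar x) = True"
| "linear_pat (PPair p q) = (linear_pat p \<and> linear_pat q \<and> pvars p \<inter> pvars q = {})"

fun wf_trm :: "'v trm \<Rightarrow> bool" where
  "wf_trm (Var x) = True"
| "wf_trm (Lam p t) = (linear_pat p \<and> wf_trm t)"
| "wf_trm (Pair t u) = (wf_trm t \<and> wf_trm u)"
| "wf_trm (App t u) = (wf_trm t \<and> wf_trm u)"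
| "wf_trm (Sub t p u) = (linear_pat p \<and> wf_trm t \<and> wf_trm u)"

fun fv :: "'v trm \<Rightarrow> 'v set" where
  "fv (Var x) = {x}"
| "fv (Lam p t) = fv t - pvars p"
| "fv (Pair t u) = fv t \<union> fv u"
| "fv (App t u) = fv t \<union> fv u"
| "fv (Sub t p u) = (fv t - pvars p) \<union> fv u"

text \<open>A list context  L ::= Box | L[p/u]  is represented by the list of its
  explicit matchings, outermost first.\<close>
type_synonym 'v lctx = "('v pat \<times> 'v trm) list"

fun plugL :: "'v lctx \<Rightarrow> 'v trm \<Rightarrow> 'v trm" where
  "plugL [] t = t"
| "plugL ((p, u) # L) t = Sub (plugL L t) p u"

definition head_clash :: "'v trm \<Rightarrow> bool" where
  "head_clash s \<longleftrightarrow>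
     (\<exists>L u1 u2 v. s = App (plugL L (Pair u1 u2)) v)
   \<or> (\<exists>t p1 p2 L p u. s = Sub t (PPair p1 p2) (plugL L (Lam p u)))
   \<or> (\<exists>L1 p1 p2 t L2 p u. s = App (plugL L1 (Lam (PPair p1 p2) t)) (plugL L2 (Lam p u)))"

inductive head_sub :: "'v trm \<Rightarrow> 'v trm \<Rightarrow> bool" where
  hs_here: "head_sub t t"
| hs_lam: "head_sub s t \<Longrightarrow> head_sub s (Lam p t)"
| hs_app: "head_sub s t \<Longrightarrow> head_sub s (App t u)"
| hs_sub: "head_sub s t \<Longrightarrow> head_sub s (Sub t p u)"
| hs_subarg: "head_sub s u \<Longrightarrow> head_sub s (Sub t (PPair p1 p2) u)"

definition clash_free :: "'v trm \<Rightarrow> bool" where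
  "clash_free t \<longleftrightarrow> (\<forall>s. head_sub s t \<longrightarrow> \<not> head_clash s)"

datatype ty =
    TN
  | TM
  | Prod "ty multiset" "ty multiset"
  | Arr "ty multiset" ty

definition tight :: "ty \<Rightarrow> bool" where
  "tight \<sigma> \<longleftrightarrow> \<sigma> = TN \<or> \<sigma> = TM"

type_synonym 'v ctx = "'v \<Rightarrow> ty multiset"

definition emp :: "'v ctx" where "emp = (\<lambda>_. {#})"

definition cdom :: "'v ctx \<Rightarrow> 'v set" where
  "cdom \<Gamma> = {x. \<Gamma> x \<noteq> {#}}"

definition cjoin :: "'v ctx \<Rightarrow> 'v ctx \<Rightarrow> 'v ctx" where
  "cjoin \<Gamma> \<Delta> = (\<lambda>x. \<Gamma> x + \<Delta> x)"

definition crestrict :: "'v ctx \<Rightarrow> 'v pat \<Rightarrow> 'v ctx" where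
  "crestrict \<Gamma> p = (\<lambda>x. if x \<in> pvars p then \<Gamma> x else {#})"

definition cremove :: "'v ctx \<Rightarrow> 'v pat \<Rightarrow> 'v ctx" where
  "cremove \<Gamma> p = (\<lambda>x. if x \<in> pvars p then {#} else \<Gamma> x)"

definition tight_ctx :: "'v ctx \<Rightarrow> bool" where
  "tight_ctx \<Gamma> \<longleftrightarrow> (\<forall>x. \<forall>\<sigma>\<in>#\<Gamma> x. tight \<sigma>)"

text \<open>patj \<Gamma> p A e m f  is  \<Gamma> ||-^(e,m,f) p : A\<close>
inductive patj :: "'v ctx \<Rightarrow> 'v pat \<Rightarrow> ty multiset \<Rightarrow> nat \<Rightarrow> nat \<Rightarrow> nat \<Rightarrow> bool" where
  pat_v: "patj (emp(x := A)) (PVar x) A 1 0 0"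
| pat_pair: "patj \<Gamma> p A ep mp fp \<Longrightarrow> patj \<Delta> q B eq mq fq \<Longrightarrow> pvars p \<inter> pvars q = {} \<Longrightarrow>
     patj (cjoin \<Gamma> \<Delta>) (PPair p q) {#Prod A B#} (ep + eq) (1 + mp + mq) (fp + fq)"
| pat_p: "cdom \<Gamma> \<subseteq> pvars (PPair p q) \<Longrightarrow> tight_ctx \<Gamma> \<Longrightarrow> patj \<Gamma> (PPair p q) {#TN#} 0 0 1"

text \<open>typing \<Gamma> t \<sigma> b e m f  is  \<Gamma> |-^(b,e,m,f) t : \<sigma>;
  mtyping \<Gamma> t A b e m f  is  \<Gamma> |-^(b,e,m,f) t : A  (rule many, with the finite
  family given one element at a time).\<close>
inductive typing :: "'v ctx \<Rightarrow> 'v trm \<Rightarrow> ty \<Rightarrow> nat \<Rightarrow> nat \<Rightarrow> nat \<Rightarrow> nat \<Rightarrow> bool"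
  and mtyping :: "'v ctx \<Rightarrow> 'v trm \<Rightarrow> ty multiset \<Rightarrow> nat \<Rightarrow> nat \<Rightarrow> nat \<Rightarrow> nat \<Rightarrow> bool" where
  ax: "typing (emp(x := {#\<sigma>#})) (Var x) \<sigma> 0 0 0 0"
| abs: "typing \<Gamma> t \<sigma> b e m f \<Longrightarrow> patj (crestrict \<Gamma> p) p A ep mp fp \<Longrightarrow>
     typing (cremove \<Gamma> p) (Lam p t) (Arr A \<sigma>) (b + 1) (e + ep) (m + mp) (f + fp)"
| abs_p: "typing \<Gamma> t \<tau> b e m f \<Longrightarrow> tight \<tau> \<Longrightarrow> tight_ctx (crestrict \<Gamma> p) \<Longrightarrow>
     typing (cremove \<Gamma> p) (Lam p t) TM b e m (f + 1)"
| many_nil: "mtyping emp t {#} 0 0 0 0"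
| many_cons: "typing \<Gamma> t \<sigma> b e m f \<Longrightarrow> mtyping \<Delta> t A b' e' m' f' \<Longrightarrow>
     mtyping (cjoin \<Gamma> \<Delta>) t (add_mset \<sigma> A) (b + b') (e + e') (m + m') (f + f')"
| app: "typing \<Gamma> t (Arr A \<sigma>) bt et mt ft \<Longrightarrow> mtyping \<Delta> u A bu eu mu fu \<Longrightarrow>
     typing (cjoin \<Gamma> \<Delta>) (App t u) \<sigma> (bt + bu) (et + eu) (mt + mu) (ft + fu)"
| app_p: "typing \<Gamma> t TN b e m f \<Longrightarrow> typing \<Gamma> (App t u) TN b e m (f + 1)"
| pair: "mtyping \<Gamma> t A bt et mt ft \<Longrightarrow> mtyping \<Delta> u B bu eu mu fu \<Longrightarrow>
     typing (cjoin \<Gamma> \<Delta>) (Pair t u) (Prod A B) (bt + bu) (et + eu) (mt + mu) (ft + fu)"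
| pair_p: "typing emp (Pair t u) TM 0 0 0 1"
| match: "typing \<Gamma> t \<sigma> bt et mt ft \<Longrightarrow> patj (crestrict \<Gamma> p) p A ep mp fp \<Longrightarrow>
     mtyping \<Delta> u A bu eu mu fu \<Longrightarrow>
     typing (cjoin (cremove \<Gamma> p) \<Delta>) (Sub t p u) \<sigma> (bt + bu) (et + eu + ep) (mt + mu + mp) (ft + fu + fp)"

end

theory Submission
  imports Defs
begin

lemma cdom_emp[simp]: "cdom emp = {}" by (simp add: cdom_def emp_def)
lemma cdom_upd: "cdom (emp(x := {#s#})) = {x}" unfolding cdom_def emp_def by auto
lemma cdom_join[simp]: "cdom (cjoin G D) = cdom G \<union> cdom D" by (auto simp: cdom_def cjoin_def)
lemma cdom_remove[simp]: "cdom (cremove G p) = cdom G - pvars p" by (auto simp: cdom_def cremove_def)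

lemma relevance:
  "typing G t s b e m f \<Longrightarrow> cdom G \<subseteq> fv t"
  "mtyping G t A b e m f \<Longrightarrow> cdom G \<subseteq> fv t"
  by (induction rule: typing_mtyping.inducts) (auto simp: cdom_upd, auto simp: cdom_def Defs.emp_def split: if_splits)

lemma mtyping_elem:
  "mtyping D u A b e m f \<Longrightarrow> s \<in># A \<Longrightarrow> \<exists>G b e m f. typing G u s b e m f"
proof (induction rule: typing_mtyping.inducts(2)[where ?P1.0="\<lambda>_ _ _ _ _ _ _. True"])
  case (many_cons G t s0 b e m f D A b' e' m' f')
  show ?case
  proof (cases "s = s0")
    case True then show ?thesis using many_cons by blast
  next
    case False then have "s \<in># A" using many_cons by simp
    then show ?thesis using many_cons by blast
  qed
qed auto

lemma patj_pair: "patj G (PPair p q) A e m f \<Longrightarrow> (\<exists>X Y. A = {#Prod X Y#}) \<or> A = {#TN#}"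
  by (cases rule: patj.cases) auto

lemma pat_arg:
  assumes "patj G (PPair p q) A e m f" "mtyping D u A b' e' m' f'"
  shows "\<exists>G' b e m f s. typing G' u s b e m f \<and> (s = TN \<or> (\<exists>X Y. s = Prod X Y))"
  using patj_pair[OF assms(1)]
proof (elim disjE exE)
  fix X Y assume "A = {#Prod X Y#}"
  then show ?thesis using mtyping_elem[OF assms(2), of "Prod X Y"] by (simp; blast)
next
  assume "A = {#TN#}"
  then show ?thesis using mtyping_elem[OF assms(2), of TN] by (simp; blast)
qed

inductive_cases Sub_E: "typing G (Sub t p u) s b e m f"
inductive_cases Lam_E: "typing G (Lam p t) s b e m f"
inductive_cases App_E: "typing G (App t u) s b e m f"
inductive_cases Pair_E: "typing G (Pair t u) s b e m f"

lemma plug_typing: "typing G (plugL L t) s b e m f \<Longrightarrow> \<exists>G b e m f. typing G t s b e m f"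
proof (induction L arbitrary: G b e m f)
  case Nil then show ?case by (simp; blast)
next
  case (Cons a L) then show ?case
    by (cases a) (auto elim: Sub_E)
qed

lemma pair_ty: "typing G (plugL L (Pair t u)) s b e m f \<Longrightarrow> s = TM \<or> (\<exists>X Y. s = Prod X Y)"
  using plug_typing by (fastforce elim: Pair_E)

lemma lam_ty: "typing G (plugL L (Lam p t)) s b e m f \<Longrightarrow> s = TM \<or> (\<exists>X Y. s = Arr X Y)"
  using plug_typing by (fastforce elim: Lam_E)

lemma no_clash: "typing G s sg b e m f \<Longrightarrow> \<not> head_clash s"
proof
  assume T: "typing G s sg b e m f" and H: "head_clash s"
  from H show False unfolding head_clash_def
  proof (elim disjE exE)
    fix L u1 u2 v assume "s = App (plugL L (Pair u1 u2)) v"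
    with T show False by (auto elim!: App_E dest: pair_ty)
  next
    fix t p1 p2 L p u assume "s = Sub t (PPair p1 p2) (plugL L (Lam p u))"
    with T show False
      by (auto elim!: Sub_E dest!: pat_arg dest: lam_ty)
  next
    fix L1 p1 p2 t L2 p u assume "s = App (plugL L1 (Lam (PPair p1 p2) t)) (plugL L2 (Lam p u))"
    with T show False
      apply (auto elim!: App_E)
       apply (drule plug_typing, auto elim!: Lam_E)
       apply (drule (1) pat_arg, auto dest: lam_ty)
      done
  qed
qed

lemma head_typed: "head_sub s t \<Longrightarrow> typing G t sg b e m f \<Longrightarrow> \<exists>G b e m f sg. typing G s sg b e m f"
proof (induction arbitrary: G sg b e m f rule: head_sub.induct)
  case (hs_here t) then show ?case by blast
next
  case (hs_lam s t p) then show ?case by (auto elim!: Lam_E)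
next
  case (hs_app s t u) then show ?case by (auto elim!: App_E)
next
  case (hs_sub s t p u) then show ?case by (auto elim!: Sub_E)
next
  case (hs_subarg s u t p1 p2)
  from hs_subarg.prems show ?case
  proof (rule Sub_E)
    fix G1 bt et mt ft A ep mp fp D bu eu mu fu
    assume P: "patj (crestrict G1 (PPair p1 p2)) (PPair p1 p2) A ep mp fp"
      and M: "mtyping D u A bu eu mu fu"
    obtain s0 where "s0 \<in># A" using patj_pair[OF P] by auto
    with M obtain G' b' e' m' f' where "typing G' u s0 b' e' m' f'"
      using mtyping_elem by blast
    then show ?thesis using hs_subarg.IH by blast
  qed
qed

theorem lemma2:
  fixes t :: "'v trm" and \<Gamma> :: "'v ctx"
  assumes "wf_trm t"
    and "typing \<Gamma> t \<sigma> b e m f"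
  shows "cdom \<Gamma> \<subseteq> fv t \<and> clash_free t"
  using assms(2) relevance(1) head_typed no_clash unfolding clash_free_def by metis

end
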